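(* Let $R>r>0$ and let $\mathcal{K}^*_{\partial\Omega}$ be the Neumann–Poincaré operator on the Hilbert space $K^{-1/2}_0$ as described in the context. Then $\mathcal{K}^*_{\partial\Omega}$ has only absolutely continuous spectrum, and its spectrum is $[-1/2,1/2]$.
   Context: Identify $\mathbb{R}^2$ with $\mathbb{C}$; for $a\in\mathbb{R}\setminus\{0\}$ let $B_a$ be the open disk of radius $|a|$ centered at $(a,0)$. Fix $R>r>0$, let $\Omega=B_R\setminus\overline{B_r}$ (crescent domain), and put $q=\frac{1}{2r}-\frac{1}{2R}>0$. For $k\neq0$ let $\mathbb{S}(k)=\frac{1}{2|k|}\mathrm{diag}(1-e^{-|k|q},\,1+e^{-|k|q})$ and $\mathbb{K}(k)=\frac12e^{-|k|q}\mathrm{diag}(-1,1)$. $K^{-1/2}_0$ is the Hilbert space of pairs $\hat\varphi=(\hat\varphi_1,\hat\varphi_2)^T$ of measurable complex functions on $\mathbb{R}$ (mod a.e.) with $\int_{\mathbb{R}}\hat\varphi^T\mathbb{S}\overline{\hat\varphi}\,dk<\infty$, inner product $\langle\psi,\varphi\rangle_{-1/2}=\int_{\mathbb{R}}\hat\psi^T\mathbb{S}\overline{\hat\varphi}\,dk$. (In the paper such a pair represents the boundary density $\varphi=U^{-1}P\hat\varphi$ on $\partial\Omega$, with $P=\frac1{\sqrt2}\begin{bmatrix}-1&1\\1&1\end{bmatrix}$ and $U$ the Fourier transform of the density pulled back by $z\mapsto1/z$ to the two vertical lines bounding the image strip.) The Neumann–Poincaré operator $\mathcal{K}^*_{\partial\Omega}$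 on $K^{-1/2}_0$ is the multiplication operator $\hat\varphi\mapsto\mathbb{K}\hat\varphi$. *)

theory Defs
  imports "HOL-Analysis.Analysis" "HOL-Probability.Probability"
begin

text \<open>Crescent domain between B_R and B_r, R > r > 0; parameter q = 1/(2r) - 1/(2R).
  Elements of K^{-1/2}_0 are represented by pairs of complex functions on the real line,
  identified modulo Lebesgue-a.e. equality.\<close>

definition crescent_q :: "real \<Rightarrow> real \<Rightarrow> real" where
  "crescent_q r R = 1 / (2 * r) - 1 / (2 * R)"

text \<open>Diagonal entries of the weight matrix S(k) (k \<noteq> 0; the value at k = 0 is irrelevant).\<close>
definition S1 :: "real \<Rightarrow> real \<Rightarrow> real \<Rightarrow> real" where
  "S1 r R k = (1 - exp (- \<bar>k\<bar> * crescent_q r R)) / (2 * \<bar>k\<bar>)"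

definition S2 :: "real \<Rightarrow> real \<Rightarrow> real \<Rightarrow> real" where
  "S2 r R k = (1 + exp (- \<bar>k\<bar> * crescent_q r R)) / (2 * \<bar>k\<bar>)"

definition K1 :: "real \<Rightarrow> real \<Rightarrow> real \<Rightarrow> real" where
  "K1 r R k = - (1/2) * exp (- \<bar>k\<bar> * crescent_q r R)"

definition K2 :: "real \<Rightarrow> real \<Rightarrow> real \<Rightarrow> real" where
  "K2 r R k = (1/2) * exp (- \<bar>k\<bar> * crescent_q r R)"

definition Sform :: "real \<Rightarrow> real \<Rightarrow> (real \<Rightarrow> complex \<times> complex) \<Rightarrow> real \<Rightarrow> real" where
  "Sform r R \<phi> k = S1 r R k * (cmod (fst (\<phi> k)))\<^sup>2 + S2 r R k * (cmod (snd (\<phi> k)))\<^sup>2"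

definition Kspace :: "real \<Rightarrow> real \<Rightarrow> (real \<Rightarrow> complex \<times> complex) set" where
  "Kspace r R = {\<phi>. \<phi> \<in> borel_measurable lborel \<and> integrable lborel (Sform r R \<phi>)}"

definition Kinner :: "real \<Rightarrow> real \<Rightarrow> (real \<Rightarrow> complex \<times> complex) \<Rightarrow> (real \<Rightarrow> complex \<times> complex) \<Rightarrow> complex" where
  "Kinner r R \<psi> \<phi> = integral\<^sup>L lborel (\<lambda>k.
      complex_of_real (S1 r R k) * fst (\<psi> k) * cnj (fst (\<phi> k))
    + complex_of_real (S2 r R k) * snd (\<psi> k) * cnj (snd (\<phi> k)))"

text \<open>(K* - lambda I) applied to a representative: multiplication by diag(K1 - lambda, K2 - lambda).
  For lambda = 0 this is the Neumann-Poincare operator itself.\<close>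
definition NP_shift :: "real \<Rightarrow> real \<Rightarrow> complex \<Rightarrow> (real \<Rightarrow> complex \<times> complex) \<Rightarrow> (real \<Rightarrow> complex \<times> complex)" where
  "NP_shift r R c \<phi> = (\<lambda>k. ((complex_of_real (K1 r R k) - c) * fst (\<phi> k),
                              (complex_of_real (K2 r R k) - c) * snd (\<phi> k)))"

text \<open>Spectrum of the (bounded) operator K* on K^{-1/2}_0: lambda is in the resolvent set iff
  K* - lambda I is a bijection of the space (bounded inverse is automatic by the open mapping
  theorem); elements are compared modulo a.e. equality.\<close>
definition NP_spectrum :: "real \<Rightarrow> real \<Rightarrow> complex set" where
  "NP_spectrum r R = {c. \<not> (
      (\<forall>\<psi>\<in>Kspace r R. \<exists>\<phi>\<in>Kspace r R. AE k in lborel. NP_shift r R c \<phi> k = \<psi> k)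
    \<and> (\<forall>\<phi>\<in>Kspace r R. (AE k in lborel. NP_shift r R c \<phi> k = (0, 0))
                          \<longrightarrow> (AE k in lborel. \<phi> k = (0, 0))))}"

text \<open>Purely absolutely continuous spectrum: for every phi, the spectral measure mu_phi of the
  self-adjoint operator K* w.r.t. phi (characterised as the finite Borel measure whose Borel-Stieltjes
  transform is the resolvent matrix element: <(K* - z)^{-1} phi, phi> = integral 1/(t - z) d mu_phi(t)
  for all non-real z) is absolutely continuous w.r.t. Lebesgue measure.\<close>
definition NP_purely_ac :: "real \<Rightarrow> real \<Rightarrow> bool" where
  "NP_purely_ac r R = (\<forall>\<phi>\<in>Kspace r R. \<exists>\<mu> :: real measure.
      sets \<mu> = sets borel \<and> finite_measure \<mu> \<and> absolutely_continuous lborel \<mu> \<and>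
      (\<forall>z \<psi>. Im z \<noteq> 0 \<longrightarrow> \<psi> \<in> Kspace r R \<longrightarrow>
          (AE k in lborel. NP_shift r R z \<psi> k = \<phi> k) \<longrightarrow>
          Kinner r R \<psi> \<phi> = integral\<^sup>L \<mu> (\<lambda>t. 1 / (complex_of_real t - z))))"

end

theory Submission
  imports Defs
begin


lemma meas_basic[measurable]:
  "K1 r R \<in> borel_measurable borel" "K2 r R \<in> borel_measurable borel"
  "S1 r R \<in> borel_measurable borel" "S2 r R \<in> borel_measurable borel"
  unfolding K1_def K2_def S1_def S2_def by measurable

lemma meas_fst[measurable (raw)]:
  fixes \<phi> :: "'a \<Rightarrow> complex \<times> complex"
  assumes "\<phi> \<in> borel_measurable M"
  shows "(\<lambda>x. fst (\<phi> x)) \<in> borel_measurable M" "(\<lambda>x. snd (\<phi> x)) \<in> borel_measurable M"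
  using measurable_compose[OF assms borel_measurable_continuous_onI[OF continuous_on_fst[OF continuous_on_id]]]
   measurable_compose[OF assms borel_measurable_continuous_onI[OF continuous_on_snd[OF continuous_on_id]]]
  by auto

lemma meas_shift:
  assumes "\<phi> \<in> borel_measurable lborel"
  shows "NP_shift r R c \<phi> \<in> borel_measurable lborel"
  using assms unfolding NP_shift_def by measurable

lemma meas_Sform:
  assumes "\<phi> \<in> borel_measurable lborel"
  shows "Sform r R \<phi> \<in> borel_measurable lborel"
  using assms unfolding Sform_def by measurable



lemma exp_diff_bound:
  fixes q a b :: real
  assumes "0 < q" "0 \<le> a" "a < b"
  shows "0 < exp (-a*q) - exp (-b*q)" "exp (-a*q) - exp (-b*q) \<le> q * (b - a)"
proof -
  show "0 < exp (-a*q) - exp (-b*q)" using assms by simp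
  have e: "exp (-b*q) = exp (-a*q) * exp (-(q*(b-a)))" by (simp add: exp_add[symmetric] algebra_simps)
  have "1 - q*(b-a) \<le> exp (-(q*(b-a)))" using exp_ge_add_one_self[of "-(q*(b-a))"] by simp
  hence "1 - exp (-(q*(b-a))) \<le> q*(b-a)" by simp
  moreover have "exp (-a*q) \<le> 1" using assms by simp
  moreover have "0 \<le> 1 - exp (-(q*(b-a)))" using assms by simp
  ultimately have "exp (-a*q) * (1 - exp (-(q*(b-a)))) \<le> 1 * (q*(b-a))"
    by (intro mult_mono) auto
  thus "exp (-a*q) - exp (-b*q) \<le> q * (b - a)" using e by (simp add: algebra_simps)
qed

lemma S1_nonneg: "0 < crescent_q r R \<Longrightarrow> 0 \<le> S1 r R k"
  unfolding S1_def by (auto intro!: divide_nonneg_nonneg)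

lemma S2_nonneg: "0 \<le> S2 r R k"
  unfolding S2_def by (auto intro!: divide_nonneg_nonneg add_nonneg_nonneg)

lemma S1_upper: assumes "0 < crescent_q r R" shows "S1 r R k \<le> crescent_q r R / 2"
proof (cases "k = 0")
  case True thus ?thesis using assms by (simp add: S1_def)
next
  case False
  let ?q = "crescent_q r R"
  have "1 - \<bar>k\<bar>*?q \<le> exp (-\<bar>k\<bar>*?q)" using exp_ge_add_one_self[of "-\<bar>k\<bar>*?q"] by simp
  hence "1 - exp (-\<bar>k\<bar>*?q) \<le> \<bar>k\<bar>*?q" by simp
  hence "(1 - exp (-\<bar>k\<bar>*?q)) / (2*\<bar>k\<bar>) \<le> (\<bar>k\<bar>*?q) / (2*\<bar>k\<bar>)"
    using False by (intro divide_right_mono) auto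
  thus ?thesis using False by (simp add: S1_def)
qed

lemma S1_lower: assumes "0 < crescent_q r R" "0 < k"
  shows "crescent_q r R / (2 * (1 + k * crescent_q r R)) \<le> S1 r R k"
proof -
  let ?q = "crescent_q r R"
  let ?x = "k * ?q"
  have x: "0 < ?x" using assms by simp
  have "1 + ?x \<le> exp ?x" by (rule exp_ge_add_one_self)
  hence "exp (-?x) \<le> 1 / (1 + ?x)" using x by (simp add: exp_minus field_simps)
  hence "?x / (1 + ?x) \<le> 1 - exp (-?x)" using x by (simp add: field_simps)
  hence "(?x / (1 + ?x)) / (2*k) \<le> (1 - exp (-?x)) / (2*k)" using assms by (intro divide_right_mono) auto
  moreover have "(?x / (1 + ?x)) / (2*k) = (k * ?q) / (k * (2 * (1 + ?x)))"
    by (simp add: divide_divide_eq_left mult.commute mult.left_commute)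
  moreover have "(k * ?q) / (k * (2 * (1 + ?x))) = ?q / (2 * (1 + ?x))"
    using assms by (intro nonzero_mult_divide_mult_cancel_left) auto
  ultimately have "?q / (2 * (1 + ?x)) \<le> (1 - exp (-?x)) / (2*k)" by simp
  moreover have "S1 r R k = (1 - exp (-?x)) / (2*k)" using assms by (simp add: S1_def)
  ultimately show ?thesis by simp
qed

lemma not_integrable_big:
  fixes f :: "real \<Rightarrow> real"
  assumes "\<And>n::nat. \<exists>g. integrable lborel g \<and> (AE k in lborel. g k \<le> f k) \<and> real n \<le> integral\<^sup>L lborel g"
  shows "\<not> integrable lborel f"
proof
  assume f: "integrable lborel f"
  obtain n :: nat where n: "integral\<^sup>L lborel f < n" using reals_Archimedean2 by blast
  obtain g where g: "integrable lborel g" "AE k in lborel. g k \<le> f k" "real n \<le> integral\<^sup>L lborel g"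
    using assms by blast
  have "integral\<^sup>L lborel g \<le> integral\<^sup>L lborel f" using g f by (intro integral_mono_AE) auto
  thus False using n g by simp
qed

lemma not_integrable_sing:
  fixes f :: "real \<Rightarrow> real"
  assumes C: "0 < C" and A: "AE k in lborel. k0 < k \<and> k \<le> k0 + 1 \<longrightarrow> C / (k - k0)^2 \<le> f k"
    and P: "AE k in lborel. 0 \<le> f k"
  shows "\<not> integrable lborel f"
proof (rule not_integrable_big)
  fix n :: nat
  obtain m :: nat where m: "max 2 (4 * n / C) < m" using reals_Archimedean2 by blast
  have m2: "2 < real m" and mn: "4 * n / C < m" using m by auto
  have mpos: "0 < real m" using m2 by simp
  define g where "g k = (C * m^2 / 4) * indicator {k0 + 1/m .. k0 + 2/m} k" for k
  have "integrable lborel g" unfolding g_def by (intro integrable_mult_right) (auto simp: integrable_indicator_iff emeasure_lborel_Icc_eq)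
  moreover have "AE k in lborel. g k \<le> f k"
    using A P
  proof eventually_elim
    case (elim k)
    show ?case
    proof (cases "k \<in> {k0 + 1/m .. k0 + 2/m}")
      case True
      define d where "d = k - k0"
      have d: "1/m \<le> d" "d \<le> 2/m" using True by (auto simp: d_def)
      have dpos: "0 < d" using d mpos by (smt (verit) divide_pos_pos)
      have "2 / real m \<le> 1" using m2 by simp
      hence kin: "k0 < k \<and> k \<le> k0 + 1" using d dpos by (auto simp: d_def)
      have "d * m \<le> 2" using d mpos by (simp add: field_simps)
      hence "(d*m)^2 \<le> 2^2" using dpos mpos by (intro power_mono) auto
      hence "d^2 * m^2 \<le> 4" by (simp add: power_mult_distrib)
      hence "m^2/4 \<le> 1/d^2" using dpos by (simp add: field_simps)
      hence "C * (m^2/4) \<le> C * (1/d^2)" using C by (intro mult_left_mono) auto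
      hence h1: "C * m^2/4 \<le> C / (k - k0)^2" by (simp add: d_def)
      have h2: "C / (k - k0)^2 \<le> f k" using elim kin by blast
      have "g k = C * m^2/4" using True by (simp add: g_def)
      thus ?thesis using h1 h2 by linarith
    next
      case False thus ?thesis using elim by (simp add: g_def)
    qed
  qed
  moreover have "real n \<le> integral\<^sup>L lborel g"
  proof -
    have "integral\<^sup>L lborel g = (C * m^2 / 4) * (1/m)"
      unfolding g_def using mpos by (simp add: field_simps)
    also have "\<dots> = C * m / 4" using mpos by (simp add: power2_eq_square field_simps)
    finally show ?thesis using mn C by (simp add: field_simps)
  qed
  ultimately show "\<exists>g. integrable lborel g \<and> (AE k in lborel. g k \<le> f k) \<and> real n \<le> integral\<^sup>L lborel g"
    by blast
qed

lemma not_integrable_inf: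
  fixes f :: "real \<Rightarrow> real"
  assumes C: "0 < C" and A: "AE k in lborel. a \<le> k \<longrightarrow> C \<le> f k"
    and P: "AE k in lborel. 0 \<le> f k"
  shows "\<not> integrable lborel f"
proof (rule not_integrable_big)
  fix n :: nat
  obtain m :: nat where m: "n / C < m" using reals_Archimedean2 by blast
  define g where "g k = C * indicator {a .. a + m} k" for k
  have "integrable lborel g" unfolding g_def by (intro integrable_mult_right) (auto simp: integrable_indicator_iff emeasure_lborel_Icc_eq)
  moreover have "AE k in lborel. g k \<le> f k"
    using A P by eventually_elim (auto simp: g_def indicator_def)
  moreover have "real n \<le> integral\<^sup>L lborel g"
    unfolding g_def using m C by (simp add: field_simps)
  ultimately show "\<exists>g. integrable lborel g \<and> (AE k in lborel. g k \<le> f k) \<and> real n \<le> integral\<^sup>L lborel g"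
    by blast
qed



lemma resolvent:
  assumes q: "0 < crescent_q r R" and d: "0 < \<delta>"
    and b1: "\<And>k. \<delta> \<le> cmod (complex_of_real (K1 r R k) - c)"
    and b2: "\<And>k. \<delta> \<le> cmod (complex_of_real (K2 r R k) - c)"
  shows "c \<notin> NP_spectrum r R"
proof -
  have nz1: "complex_of_real (K1 r R k) - c \<noteq> 0" for k using b1[of k] d by auto
  have nz2: "complex_of_real (K2 r R k) - c \<noteq> 0" for k using b2[of k] d by auto
  have surj: "\<exists>\<phi>\<in>Kspace r R. AE k in lborel. NP_shift r R c \<phi> k = \<psi> k" if \<psi>: "\<psi> \<in> Kspace r R" for \<psi>
  proof
    define \<phi> where "\<phi> k = (fst (\<psi> k) / (complex_of_real (K1 r R k) - c), snd (\<psi> k) / (complex_of_real (K2 r R k) - c))" for k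
    show "AE k in lborel. NP_shift r R c \<phi> k = \<psi> k"
    proof (intro AE_I2)
      fix k show "NP_shift r R c \<phi> k = \<psi> k" using nz1[of k] nz2[of k]
        by (simp add: NP_shift_def \<phi>_def add: prod_eq_iff)
    qed
    have m\<psi>[measurable]: "\<psi> \<in> borel_measurable lborel" using \<psi> by (simp add: Kspace_def)
    have m\<phi>: "\<phi> \<in> borel_measurable lborel" unfolding \<phi>_def by measurable
    have ip: "integrable lborel (Sform r R \<psi>)" using \<psi> by (simp add: Kspace_def)
    have "integrable lborel (Sform r R \<phi>)"
    proof (rule Bochner_Integration.integrable_bound[OF integrable_divide[OF ip, of "\<delta>^2"]])
      show "Sform r R \<phi> \<in> borel_measurable lborel" by (rule meas_Sform[OF m\<phi>])
      show "AE k in lborel. norm (Sform r R \<phi> k) \<le> norm (Sform r R \<psi> k / \<delta>^2)"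
      proof (intro AE_I2)
        fix k
        have s1: "0 \<le> S1 r R k" "0 \<le> S2 r R k" using S1_nonneg[OF q] S2_nonneg by auto
        have e1: "(cmod (fst (\<phi> k)))^2 \<le> (cmod (fst (\<psi> k)))^2 / \<delta>^2"
        proof -
          have "cmod (fst (\<phi> k)) = cmod (fst (\<psi> k)) / cmod (complex_of_real (K1 r R k) - c)"
            by (simp add: \<phi>_def norm_divide)
          also have "\<dots> \<le> cmod (fst (\<psi> k)) / \<delta>" using b1[of k] d by (intro divide_left_mono) (auto intro!: mult_pos_pos)
          finally have "(cmod (fst (\<phi> k)))^2 \<le> (cmod (fst (\<psi> k)) / \<delta>)^2" by (intro power_mono) auto
          thus ?thesis by (simp add: power_divide)
        qed
        have e2: "(cmod (snd (\<phi> k)))^2 \<le> (cmod (snd (\<psi> k)))^2 / \<delta>^2"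
        proof -
          have "cmod (snd (\<phi> k)) = cmod (snd (\<psi> k)) / cmod (complex_of_real (K2 r R k) - c)"
            by (simp add: \<phi>_def norm_divide)
          also have "\<dots> \<le> cmod (snd (\<psi> k)) / \<delta>" using b2[of k] d by (intro divide_left_mono) (auto intro!: mult_pos_pos)
          finally have "(cmod (snd (\<phi> k)))^2 \<le> (cmod (snd (\<psi> k)) / \<delta>)^2" by (intro power_mono) auto
          thus ?thesis by (simp add: power_divide)
        qed
        have "Sform r R \<phi> k \<le> S1 r R k * ((cmod (fst (\<psi> k)))^2 / \<delta>^2) + S2 r R k * ((cmod (snd (\<psi> k)))^2 / \<delta>^2)"
          unfolding Sform_def using s1 e1 e2 by (intro add_mono mult_left_mono) auto
        also have "\<dots> = Sform r R \<psi> k / \<delta>^2" by (simp add: Sform_def add_divide_distrib)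
        finally have "Sform r R \<phi> k \<le> Sform r R \<psi> k / \<delta>^2" .
        moreover have "0 \<le> Sform r R \<phi> k" unfolding Sform_def using s1 by auto
        moreover have "Sform r R \<psi> k \<le> \<bar>Sform r R \<psi> k\<bar>" by simp
        ultimately show "norm (Sform r R \<phi> k) \<le> norm (Sform r R \<psi> k / \<delta>^2)"
          using divide_right_mono[of "Sform r R \<psi> k" "\<bar>Sform r R \<psi> k\<bar>" "\<delta>^2"] by simp
      qed
    qed
    thus "\<phi> \<in> Kspace r R" using m\<phi> by (simp add: Kspace_def)
  qed
  have inj: "AE k in lborel. \<phi> k = (0, 0)" if "AE k in lborel. NP_shift r R c \<phi> k = (0, 0)" for \<phi>
    using that
  proof eventually_elim
    case (elim k)
    have a: "(complex_of_real (K1 r R k) - c) * fst (\<phi> k) = 0" "(complex_of_real (K2 r R k) - c) * snd (\<phi> k) = 0"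
      using elim by (simp_all add: NP_shift_def)
    show ?case using a nz1[of k] nz2[of k] by (simp only: mult_eq_0_iff prod_eq_iff fst_conv snd_conv) blast
  qed
  show ?thesis unfolding NP_spectrum_def using surj inj by blast
qed

lemma in_spectrumI:
  assumes "\<psi> \<in> Kspace r R" "\<And>\<phi>. \<phi> \<in> Kspace r R \<Longrightarrow> (AE k in lborel. NP_shift r R c \<phi> k = \<psi> k) \<Longrightarrow> False"
  shows "c \<in> NP_spectrum r R"
  unfolding NP_spectrum_def using assms by blast



lemma key_ineq:
  fixes D L e m s :: real
  assumes "0 < D" "D \<le> L*e" "0 < L" "0 < e" "0 \<le> m" "m \<le> s"
  shows "(m / L^2) / e^2 \<le> s * (1/D)^2"
proof -
  have "1/(L*e) \<le> 1/D" using assms by (intro divide_left_mono) auto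
  hence "(1/(L*e))^2 \<le> (1/D)^2" using assms by (intro power_mono) auto
  hence "m * (1/(L*e))^2 \<le> s * (1/D)^2" using assms by (intro mult_mono) auto
  moreover have "m * (1/(L*e))^2 = (m / L^2) / e^2" by (simp add: power_divide power_mult_distrib)
  ultimately show ?thesis by simp
qed

lemma S1_mult: "0 < k \<Longrightarrow> S1 r R k * k = (1 - exp (-k * crescent_q r R)) / 2"
  by (simp add: S1_def)
lemma S2_mult: "0 < k \<Longrightarrow> S2 r R k * k = (1 + exp (-k * crescent_q r R)) / 2"
  by (simp add: S2_def)

lemma Sform_nonneg: "0 < crescent_q r R \<Longrightarrow> 0 \<le> Sform r R \<phi> k"
  unfolding Sform_def using S1_nonneg[of r R k] S2_nonneg[of r R k] by auto

lemma spec_neg: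
  assumes q: "0 < crescent_q r R" and k0: "0 \<le> k0"
  shows "complex_of_real (-(1/2) * exp (-k0 * crescent_q r R)) \<in> NP_spectrum r R"
proof -
  define q where "q = crescent_q r R"
  define t where "t = -(1/2) * exp (-k0 * q)"
  define \<psi> where "\<psi> k = (complex_of_real (indicator {k0<..k0+1} k), 0::complex)" for k
  have qp: "0 < q" using q by (simp add: q_def)
  have "complex_of_real t \<in> NP_spectrum r R"
  proof (rule in_spectrumI)
    have m\<psi>: "\<psi> \<in> borel_measurable lborel" unfolding \<psi>_def by measurable
    have "integrable lborel (Sform r R \<psi>)"
    proof (rule Bochner_Integration.integrable_bound)
      show "integrable lborel (\<lambda>k. (q/2) * indicator {k0<..k0+1} k :: real)"
        using k0 by (intro integrable_mult_right) (auto simp: integrable_indicator_iff)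
      show "Sform r R \<psi> \<in> borel_measurable lborel" by (rule meas_Sform[OF m\<psi>])
      show "AE k in lborel. norm (Sform r R \<psi> k) \<le> norm ((q/2) * indicator {k0<..k0+1} k :: real)"
      proof (intro AE_I2)
        fix k
        have "0 \<le> S1 r R k" "S1 r R k \<le> q/2" using S1_nonneg[OF q] S1_upper[OF q] by (auto simp: q_def)
        thus "norm (Sform r R \<psi> k) \<le> norm ((q/2) * indicator {k0<..k0+1} k :: real)"
          using qp by (auto simp: Sform_def \<psi>_def indicator_def)
      qed
    qed
    thus "\<psi> \<in> Kspace r R" using m\<psi> by (simp add: Kspace_def)
  next
    fix \<phi> assume \<phi>: "\<phi> \<in> Kspace r R" and h: "AE k in lborel. NP_shift r R (complex_of_real t) \<phi> k = \<psi> k"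
    have int: "integrable lborel (Sform r R \<phi>)" using \<phi> by (simp add: Kspace_def)
    define m where "m = q / (2 * (1 + (k0+1) * q))"
    have mp: "0 < m" using qp k0 unfolding m_def by (intro divide_pos_pos mult_pos_pos add_pos_nonneg) auto
    have "\<not> integrable lborel (Sform r R \<phi>)"
    proof (rule not_integrable_sing[of "m / (q/2)^2"])
      show "0 < m / (q/2)^2" using mp qp by simp
      show "AE k in lborel. 0 \<le> Sform r R \<phi> k" using Sform_nonneg[OF q] by simp
      show "AE k in lborel. k0 < k \<and> k \<le> k0 + 1 \<longrightarrow> m / (q/2)^2 / (k - k0)^2 \<le> Sform r R \<phi> k"
        using h
      proof eventually_elim
        case (elim k)
        show ?case
        proof
          assume kk: "k0 < k \<and> k \<le> k0 + 1"
          define D where "D = (1/2) * (exp (-k0*q) - exp (-k*q))"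
          have Dp: "0 < D" "D \<le> (q/2) * (k - k0)"
            using exp_diff_bound[OF qp k0, of k] kk by (auto simp: D_def)
          have KD: "complex_of_real (K1 r R k) - complex_of_real t = complex_of_real D"
            using kk k0 by (simp add: K1_def t_def D_def q_def algebra_simps)
          have "complex_of_real D * fst (\<phi> k) = 1"
            using elim kk KD by (auto simp: NP_shift_def \<psi>_def)
          hence "D * cmod (fst (\<phi> k)) = 1"
            using Dp by (metis norm_mult norm_of_real abs_of_pos norm_one)
          hence cm: "cmod (fst (\<phi> k)) = 1/D" using Dp by (simp add: field_simps)
          have s1: "m \<le> S1 r R k"
          proof -
            have "m \<le> q / (2 * (1 + k * q))" unfolding m_def using kk k0 qp
              by (intro divide_left_mono mult_left_mono) (auto intro!: mult_pos_pos add_pos_nonneg)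
            also have "\<dots> \<le> S1 r R k" using S1_lower[OF q, of k] kk k0 by (simp add: q_def)
            finally show ?thesis .
          qed
          have "m / (q/2)^2 / (k - k0)^2 \<le> S1 r R k * (1/D)^2"
            using key_ineq[OF Dp(1) Dp(2) _ _ _ s1] qp kk mp by auto
          also have "\<dots> \<le> Sform r R \<phi> k"
            using cm S2_nonneg[of r R k] by (simp add: Sform_def)
          finally show "m / (q/2)^2 / (k - k0)^2 \<le> Sform r R \<phi> k" .
        qed
      qed
    qed
    thus False using int by simp
  qed
  thus ?thesis by (simp add: t_def q_def)
qed



lemma spec_pos:
  assumes q: "0 < crescent_q r R" and k0: "0 \<le> k0"
  shows "complex_of_real ((1/2) * exp (-k0 * crescent_q r R)) \<in> NP_spectrum r R"
proof -
  define q where "q = crescent_q r R"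
  define t where "t = (1/2) * exp (-k0 * q)"
  define \<psi> where "\<psi> k = (0::complex, complex_of_real (sqrt k * indicator {k0<..k0+1} k))" for k
  have qp: "0 < q" using q by (simp add: q_def)
  have "complex_of_real t \<in> NP_spectrum r R"
  proof (rule in_spectrumI)
    have m\<psi>: "\<psi> \<in> borel_measurable lborel" unfolding \<psi>_def by measurable
    have "integrable lborel (Sform r R \<psi>)"
    proof (rule Bochner_Integration.integrable_bound)
      show "integrable lborel (\<lambda>k. indicator {k0<..k0+1} k :: real)"
        using k0 by (auto simp: integrable_indicator_iff)
      show "Sform r R \<psi> \<in> borel_measurable lborel" by (rule meas_Sform[OF m\<psi>])
      show "AE k in lborel. norm (Sform r R \<psi> k) \<le> norm (indicator {k0<..k0+1} k :: real)"
      proof (intro AE_I2)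
        fix k
        show "norm (Sform r R \<psi> k) \<le> norm (indicator {k0<..k0+1} k :: real)"
        proof (cases "k \<in> {k0<..k0+1}")
          case True
          hence kp: "0 < k" using k0 by auto
          have "Sform r R \<psi> k = S2 r R k * k" using kp True by (simp add: Sform_def \<psi>_def)
          also have "\<dots> = (1 + exp (-k * q)) / 2" using S2_mult[OF kp] by (simp add: q_def)
          also have "\<dots> \<le> 1" using kp qp by simp
          finally show ?thesis using True Sform_nonneg[OF q, of \<psi> k] by simp
        next
          case False thus ?thesis by (simp add: Sform_def \<psi>_def)
        qed
      qed
    qed
    thus "\<psi> \<in> Kspace r R" using m\<psi> by (simp add: Kspace_def)
  next
    fix \<phi> assume \<phi>: "\<phi> \<in> Kspace r R" and h: "AE k in lborel. NP_shift r R (complex_of_real t) \<phi> k = \<psi> k"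
    have int: "integrable lborel (Sform r R \<phi>)" using \<phi> by (simp add: Kspace_def)
    define m where "m = (1/2::real)"
    have mp: "0 < m" by (simp add: m_def)
    have "\<not> integrable lborel (Sform r R \<phi>)"
    proof (rule not_integrable_sing[of "m / (q/2)^2"])
      show "0 < m / (q/2)^2" using mp qp by simp
      show "AE k in lborel. 0 \<le> Sform r R \<phi> k" using Sform_nonneg[OF q] by simp
      show "AE k in lborel. k0 < k \<and> k \<le> k0 + 1 \<longrightarrow> m / (q/2)^2 / (k - k0)^2 \<le> Sform r R \<phi> k"
        using h
      proof eventually_elim
        case (elim k)
        show ?case
        proof
          assume kk: "k0 < k \<and> k \<le> k0 + 1"
          have kp: "0 < k" using kk k0 by simp
          define D where "D = (1/2) * (exp (-k0*q) - exp (-k*q))"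
          have Dp: "0 < D" "D \<le> (q/2) * (k - k0)"
            using exp_diff_bound[OF qp k0, of k] kk by (auto simp: D_def)
          have KD: "complex_of_real (K2 r R k) - complex_of_real t = - complex_of_real D"
            using kk k0 by (simp add: K2_def t_def D_def q_def algebra_simps)
          have "- complex_of_real D * snd (\<phi> k) = complex_of_real (sqrt k)"
            using elim kk KD by (auto simp: NP_shift_def \<psi>_def)
          hence "D * cmod (snd (\<phi> k)) = sqrt k"
            using Dp kp by (metis norm_mult norm_minus_cancel norm_of_real abs_of_pos real_sqrt_gt_zero)
          hence cm: "cmod (snd (\<phi> k)) = sqrt k * (1/D)" using Dp by (simp add: field_simps)
          have s2: "m \<le> S2 r R k * k"
            using S2_mult[OF kp] by (simp add: m_def)
          have "m / (q/2)^2 / (k - k0)^2 \<le> (S2 r R k * k) * (1/D)^2"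
            using key_ineq[OF Dp(1) Dp(2) _ _ _ s2] qp kk mp by auto
          also have "\<dots> = S2 r R k * (cmod (snd (\<phi> k)))^2"
            using cm kp by (simp add: power_divide)
          also have "\<dots> \<le> Sform r R \<phi> k"
            using S1_nonneg[OF q, of k] by (simp add: Sform_def)
          finally show "m / (q/2)^2 / (k - k0)^2 \<le> Sform r R \<phi> k" .
        qed
      qed
    qed
    thus False using int by simp
  qed
  thus ?thesis by (simp add: t_def q_def)
qed



lemma exp_integrable:
  assumes "0 < a"
  shows "integrable lborel (\<lambda>k. indicator {1..} k * exp (-a*k) :: real)"
proof -
  have "(\<lambda>k. exp (-a*k)) absolutely_integrable_on {1..}"
    using assms by (intro nonnegative_absolutely_integrable_1 integrable_on_exp_minus_to_infinity) auto
  hence "integrable lebesgue (\<lambda>k. indicator {1..} k *\<^sub>R exp (-a*k) :: real)"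
    by (simp add: set_integrable_def)
  hence "integrable lebesgue (\<lambda>k. indicator {1..} k * exp (-a*k) :: real)" by simp
  thus ?thesis by (subst (asm) integrable_completion) (measurable)
qed

lemma zero_psi:
  assumes q: "0 < crescent_q r R"
  defines "q \<equiv> crescent_q r R"
  shows "(\<lambda>k. (complex_of_real (exp (-k*q) * sqrt k * indicator {1..} k), 0::complex)) \<in> Kspace r R"
proof -
  define \<psi> where "\<psi> k = (complex_of_real (exp (-k*q) * sqrt k * indicator {1..} k), 0::complex)" for k
  have qp: "0 < q" using q by (simp add: q_def)
  have "\<psi> \<in> Kspace r R"
  proof -
    have m\<psi>: "\<psi> \<in> borel_measurable lborel" unfolding \<psi>_def by measurable
    have "integrable lborel (Sform r R \<psi>)"
    proof (rule Bochner_Integration.integrable_bound)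
      show "integrable lborel (\<lambda>k. indicator {1..} k * exp (-q*k) :: real)"
        using exp_integrable[OF qp] .
      show "Sform r R \<psi> \<in> borel_measurable lborel" by (rule meas_Sform[OF m\<psi>])
      show "AE k in lborel. norm (Sform r R \<psi> k) \<le> norm (indicator {1..} k * exp (-q*k) :: real)"
      proof (intro AE_I2)
        fix k
        show "norm (Sform r R \<psi> k) \<le> norm (indicator {1..} k * exp (-q*k) :: real)"
        proof (cases "k \<in> {1..}")
          case True
          hence kp: "0 < k" by auto
          have e1: "exp (-k*q) \<le> 1" using kp qp by simp
          have cmp: "cmod (fst (\<psi> k)) = exp (-k*q) * sqrt k" using True kp by (simp add: \<psi>_def norm_mult)
          have "Sform r R \<psi> k = S1 r R k * (exp (-k*q) * sqrt k)^2" by (simp only: Sform_def cmp) (simp add: \<psi>_def)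
          also have "\<dots> = (S1 r R k * k) * (exp (-k*q) * exp (-k*q))"
            using kp by (simp add: power_mult_distrib power2_eq_square)
          finally have "Sform r R \<psi> k = (S1 r R k * k) * (exp (-k*q) * exp (-k*q))" .
          also have "\<dots> = ((1 - exp (-k * q)) / 2) * (exp (-k*q) * exp (-k*q))"
            by (subst S1_mult[OF kp]) (simp add: q_def)
          also have "\<dots> \<le> 1 * (1 * exp (-k*q))"
          proof -
            have e0: "0 \<le> exp (-k*q)" by simp
            have a1: "(1 - exp (-k*q))/2 \<le> 1" using e0 by (simp add: field_simps)
            have a2: "exp (-k*q) * exp (-k*q) \<le> 1 * exp (-k*q)" using e1 e0 by (rule mult_right_mono)
            have a3: "0 \<le> exp (-k*q) * exp (-k*q)" by simp
            show ?thesis using mult_mono[OF a1 a2 _ a3] by simp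
          qed
          finally have "Sform r R \<psi> k \<le> exp (-q*k)" by (simp add: mult.commute)
          thus ?thesis using True Sform_nonneg[OF q, of \<psi> k] by simp
        next
          case False thus ?thesis by (simp add: Sform_def \<psi>_def)
        qed
      qed
    qed
    with m\<psi> show "\<psi> \<in> Kspace r R" by (simp add: Kspace_def)
  qed
  thus ?thesis by (simp add: \<psi>_def[abs_def])
qed

lemma spec_zero:
  assumes q: "0 < crescent_q r R"
  shows "0 \<in> NP_spectrum r R"
proof -
  define q where "q = crescent_q r R"
  define \<psi> where "\<psi> k = (complex_of_real (exp (-k*q) * sqrt k * indicator {1..} k), 0::complex)" for k
  have qp: "0 < q" using q by (simp add: q_def)
  show ?thesis
  proof (rule in_spectrumI)
    show "\<psi> \<in> Kspace r R" using zero_psi[OF q] by (simp add: \<psi>_def[abs_def] q_def)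
  next
    fix \<phi> assume \<phi>: "\<phi> \<in> Kspace r R" and h: "AE k in lborel. NP_shift r R 0 \<phi> k = \<psi> k"
    have int: "integrable lborel (Sform r R \<phi>)" using \<phi> by (simp add: Kspace_def)
    define C where "C = 2 * (1 - exp (-q))"
    have Cp: "0 < C" using qp by (simp add: C_def)
    have "\<not> integrable lborel (Sform r R \<phi>)"
    proof (rule not_integrable_inf[of C])
      show "0 < C" by (rule Cp)
      show "AE k in lborel. 0 \<le> Sform r R \<phi> k" using Sform_nonneg[OF q] by simp
      show "AE k in lborel. 1 \<le> k \<longrightarrow> C \<le> Sform r R \<phi> k"
        using h
      proof eventually_elim
        case (elim k)
        show ?case
        proof
          assume kk: "1 \<le> k"
          have kp: "0 < k" using kk by simp
          have "complex_of_real (-(1/2) * exp (-k*q)) * fst (\<phi> k) = complex_of_real (exp (-k*q) * sqrt k)"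
            using elim kk by (auto simp: NP_shift_def \<psi>_def K1_def q_def)
          hence "cmod (complex_of_real (-(1/2) * exp (-k*q)) * fst (\<phi> k)) = cmod (complex_of_real (exp (-k*q) * sqrt k))"
            by simp
          hence "exp (-k*q) * ((1/2) * cmod (fst (\<phi> k))) = exp (-k*q) * sqrt k"
            using kp by (simp add: norm_mult abs_mult)
          hence "(1/2) * cmod (fst (\<phi> k)) = sqrt k" by simp
          hence cm: "cmod (fst (\<phi> k)) = 2 * sqrt k" by simp
          have "C \<le> 2 * (1 - exp (-k*q))" using kk qp by (simp add: C_def)
          also have "\<dots> = 4 * (S1 r R k * k)" by (subst S1_mult[OF kp]) (simp add: q_def)
          also have "\<dots> = S1 r R k * (cmod (fst (\<phi> k)))^2" using cm kp by (simp add: power_mult_distrib)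
          also have "\<dots> \<le> Sform r R \<phi> k" using S2_nonneg[of r R k] by (simp add: Sform_def)
          finally show "C \<le> Sform r R \<phi> k" .
        qed
      qed
    qed
    thus False using int by simp
  qed
qed



lemma K_abs: "0 < crescent_q r R \<Longrightarrow> \<bar>K1 r R k\<bar> \<le> 1/2 \<and> \<bar>K2 r R k\<bar> \<le> 1/2"
  unfolding K1_def K2_def by auto

lemma spectrum_eq:
  assumes q: "0 < crescent_q r R"
  shows "NP_spectrum r R = complex_of_real ` {-1/2 .. 1/2}"
proof
  define q where "q = crescent_q r R"
  have qp: "0 < q" using q by (simp add: q_def)
  show "complex_of_real ` {-1/2 .. 1/2} \<subseteq> NP_spectrum r R"
  proof
    fix c assume "c \<in> complex_of_real ` {-1/2 .. 1/2}"
    then obtain t where t: "t \<in> {-1/2 .. 1/2}" "c = complex_of_real t" by blast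
    consider "t < 0" | "t = 0" | "0 < t" by linarith
    thus "c \<in> NP_spectrum r R"
    proof cases
      case 1
      define k0 where "k0 = - ln (-2*t) / q"
      have "ln (-2*t) \<le> 0" using t 1 by simp
      hence k0: "0 \<le> k0" using qp by (simp add: k0_def divide_nonpos_pos)
      have "exp (-k0 * q) = -2*t" using qp 1 by (simp add: k0_def)
      hence "-(1/2) * exp (-k0 * crescent_q r R) = t" by (simp add: q_def)
      thus ?thesis using spec_neg[OF q k0] t by simp
    next
      case 2 thus ?thesis using spec_zero[OF q] t by simp
    next
      case 3
      define k0 where "k0 = - ln (2*t) / q"
      have "ln (2*t) \<le> 0" using t 3 by simp
      hence k0: "0 \<le> k0" using qp by (simp add: k0_def divide_nonpos_pos)
      have "exp (-k0 * q) = 2*t" using qp 3 by (simp add: k0_def)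
      hence "(1/2) * exp (-k0 * crescent_q r R) = t" by (simp add: q_def)
      thus ?thesis using spec_pos[OF q k0] t by simp
    qed
  qed
  show "NP_spectrum r R \<subseteq> complex_of_real ` {-1/2 .. 1/2}"
  proof
    fix c assume c: "c \<in> NP_spectrum r R"
    show "c \<in> complex_of_real ` {-1/2 .. 1/2}"
    proof (rule ccontr)
      assume nc: "c \<notin> complex_of_real ` {-1/2 .. 1/2}"
      have "\<exists>\<delta>>0. \<forall>x. \<bar>x\<bar> \<le> 1/2 \<longrightarrow> \<delta> \<le> cmod (complex_of_real x - c)"
      proof (cases "Im c = 0")
        case False
        show ?thesis
        proof (intro exI[of _ "\<bar>Im c\<bar>"] conjI allI impI)
          show "0 < \<bar>Im c\<bar>" using False by simp
          fix x :: real
          show "\<bar>Im c\<bar> \<le> cmod (complex_of_real x - c)"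
            using abs_Im_le_cmod[of "complex_of_real x - c"] by simp
        qed
      next
        case True
        hence ce: "c = complex_of_real (Re c)" by (simp add: complex_eq_iff)
        hence "Re c \<notin> {-1/2 .. 1/2}" using nc by auto
        hence rc: "1/2 < \<bar>Re c\<bar>" by auto
        show ?thesis
        proof (intro exI[of _ "\<bar>Re c\<bar> - 1/2"] conjI allI impI)
          show "0 < \<bar>Re c\<bar> - 1/2" using rc by simp
          fix x :: real assume "\<bar>x\<bar> \<le> 1/2"
          moreover have "cmod (complex_of_real x - c) = \<bar>x - Re c\<bar>"
            by (subst ce) (simp del: of_real_diff add: of_real_diff[symmetric])
          ultimately show "\<bar>Re c\<bar> - 1/2 \<le> cmod (complex_of_real x - c)" by linarith
        qed
      qed
      then obtain \<delta> where d: "0 < \<delta>" "\<And>x. \<bar>x\<bar> \<le> 1/2 \<Longrightarrow> \<delta> \<le> cmod (complex_of_real x - c)" by blast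
      have "c \<notin> NP_spectrum r R"
        by (rule resolvent[OF q d(1)]) (use d(2) K_abs[OF q] in auto)
      thus False using c by simp
    qed
  qed
qed



lemma meas_cnj[measurable (raw)]:
  fixes f :: "'a \<Rightarrow> complex"
  assumes "f \<in> borel_measurable M"
  shows "(\<lambda>x. cnj (f x)) \<in> borel_measurable M"
  using measurable_compose[OF assms borel_measurable_continuous_onI[OF continuous_on_cnj[OF continuous_on_id]]]
  by simp

lemma reflect:
  fixes g :: "real \<Rightarrow> complex"
  assumes "integrable lborel g"
  shows "integrable lborel (\<lambda>k. g (-k))" "integral\<^sup>L lborel (\<lambda>k. g (-k)) = integral\<^sup>L lborel g"
proof -
  show "integrable lborel (\<lambda>k. g (-k))"
    using lborel_integrable_real_affine_iff[of "-1" g 0] assms by simp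
  show "integral\<^sup>L lborel (\<lambda>k. g (-k)) = integral\<^sup>L lborel g"
    using lborel_integral_real_affine[of "-1" g 0] by simp
qed

lemma fold_pos:
  fixes g :: "real \<Rightarrow> complex"
  assumes g: "integrable lborel g"
  shows "integral\<^sup>L lborel g = integral\<^sup>L lborel (\<lambda>k. indicator {0<..} k *\<^sub>R (g k + g (-k)))"
proof -
  have gm: "g \<in> borel_measurable lborel" using g by auto
  have i1: "integrable lborel (\<lambda>k. indicator {0<..} k *\<^sub>R g k)" using g by (intro integrable_mult_indicator) auto
  have i2: "integrable lborel (\<lambda>k. indicator {..<0} k *\<^sub>R g k)" using g by (intro integrable_mult_indicator) auto
  have i3: "integrable lborel (\<lambda>k. indicator {0<..} k *\<^sub>R g (-k))" using reflect(1)[OF g] by (intro integrable_mult_indicator) auto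
  have "integral\<^sup>L lborel g = integral\<^sup>L lborel (\<lambda>k. indicator {0<..} k *\<^sub>R g k + indicator {..<0} k *\<^sub>R g k)"
  proof (rule integral_cong_AE)
    show "AE k in lborel. g k = indicator {0<..} k *\<^sub>R g k + indicator {..<0} k *\<^sub>R g k"
      using AE_lborel_singleton[of "0::real"] by eventually_elim (auto simp: indicator_def)
  qed (use gm in auto)
  also have "\<dots> = integral\<^sup>L lborel (\<lambda>k. indicator {0<..} k *\<^sub>R g k) + integral\<^sup>L lborel (\<lambda>k. indicator {..<0} k *\<^sub>R g k)"
    using i1 i2 by (rule Bochner_Integration.integral_add)
  also have "integral\<^sup>L lborel (\<lambda>k. indicator {..<0} k *\<^sub>R g k) = integral\<^sup>L lborel (\<lambda>k. indicator {0<..} k *\<^sub>R g (-k))"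
  proof -
    have "integral\<^sup>L lborel (\<lambda>k. indicator {..<0} k *\<^sub>R g k) = integral\<^sup>L lborel (\<lambda>k. indicator {..<0} (-k) *\<^sub>R g (-k))"
      using reflect(2)[OF i2] by simp
    also have "\<dots> = integral\<^sup>L lborel (\<lambda>k. indicator {0<..} k *\<^sub>R g (-k))"
      by (intro Bochner_Integration.integral_cong) (auto simp: indicator_def)
    finally show ?thesis .
  qed
  also have "integral\<^sup>L lborel (\<lambda>k. indicator {0<..} k *\<^sub>R g k) + integral\<^sup>L lborel (\<lambda>k. indicator {0<..} k *\<^sub>R g (-k))
     = integral\<^sup>L lborel (\<lambda>k. indicator {0<..} k *\<^sub>R g k + indicator {0<..} k *\<^sub>R g (-k))"
    using i1 i3 by (rule Bochner_Integration.integral_add[symmetric])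
  also have "\<dots> = integral\<^sup>L lborel (\<lambda>k. indicator {0<..} k *\<^sub>R (g k + g (-k)))"
    by (simp add: scaleR_add_right)
  finally show ?thesis .
qed

lemma fold_neg:
  fixes g :: "real \<Rightarrow> complex"
  assumes g: "integrable lborel g"
  shows "integral\<^sup>L lborel g = integral\<^sup>L lborel (\<lambda>k. indicator {..<0} k *\<^sub>R (g k + g (-k)))"
proof -
  have i: "integrable lborel (\<lambda>k. indicator {0<..} k *\<^sub>R (g k + g (-k)))"
    using g reflect(1)[OF g] by (intro integrable_mult_indicator integrable_add) auto
  have "integral\<^sup>L lborel g = integral\<^sup>L lborel (\<lambda>k. indicator {0<..} k *\<^sub>R (g k + g (-k)))"
    by (rule fold_pos[OF g])
  also have "\<dots> = integral\<^sup>L lborel (\<lambda>k. indicator {0<..} (-k) *\<^sub>R (g (-k) + g (- (-k))))"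
    using reflect(2)[OF i] by simp
  also have "\<dots> = integral\<^sup>L lborel (\<lambda>k. indicator {..<0} k *\<^sub>R (g k + g (-k)))"
    by (intro Bochner_Integration.integral_cong) (auto simp: indicator_def)
  finally show ?thesis .
qed



lemma meas_F[measurable]: "(\<lambda>k. if 0 < k then K1 r R k else K2 r R k) \<in> borel_measurable borel"
  by measurable

lemma preimage_null:
  assumes q: "0 < crescent_q r R" and N: "N \<in> null_sets lborel"
  shows "(\<lambda>k. if 0 < k then K1 r R k else K2 r R k) -` N \<in> null_sets lborel"
proof -
  define q where "q = crescent_q r R"
  have qp: "0 < q" using q by (simp add: q_def)
  define F where "F k = (if 0 < k then K1 r R k else K2 r R k)" for k
  define g1 where "g1 t = - ln (-2*t) / q" for t :: real
  define g2 where "g2 t = ln (2*t) / q" for t :: real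
  have Ns: "N \<in> sets lborel" using N by auto
  have negN: "negligible N"
    using N Ns by (simp add: negligible_iff_null_sets null_sets_completion_iff)
  have sub: "F -` N \<subseteq> {0} \<union> g1 ` (N \<inter> {..<0}) \<union> g2 ` (N \<inter> {0<..})"
  proof
    fix k assume k: "k \<in> F -` N"
    consider "k = 0" | "0 < k" | "k < 0" by linarith
    thus "k \<in> {0} \<union> g1 ` (N \<inter> {..<0}) \<union> g2 ` (N \<inter> {0<..})"
    proof cases
      case 2
      have t: "F k = -(1/2) * exp (-k*q)" using 2 by (simp add: F_def K1_def q_def)
      have "g1 (F k) = k" using 2 qp by (simp add: t g1_def)
      moreover have "F k \<in> N \<inter> {..<0}" using k t by simp
      ultimately show ?thesis by (metis UnI1 UnI2 image_eqI)
    next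
      case 3
      have t: "F k = (1/2) * exp (k*q)" using 3 by (simp add: F_def K2_def q_def)
      have "g2 (F k) = k" using 3 qp by (simp add: t g2_def)
      moreover have "F k \<in> N \<inter> {0<..}" using k t by (simp del: times_divide_eq_left mult_1)
      ultimately show ?thesis by (metis UnI2 image_eqI)
    qed simp
  qed
  have d1: "g1 differentiable_on (N \<inter> {..<0})"
  proof (rule differentiable_at_imp_differentiable_on)
    fix t assume "t \<in> N \<inter> {..<0}"
    hence t: "t < 0" by simp
    have "(g1 has_real_derivative (- (1/t) / q)) (at t)"
      unfolding g1_def using t qp by (auto intro!: derivative_eq_intros simp: field_simps)
    thus "g1 differentiable at t" using real_differentiable_def by blast
  qed
  have d2: "g2 differentiable_on (N \<inter> {0<..})"
  proof (rule differentiable_at_imp_differentiable_on)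
    fix t assume "t \<in> N \<inter> {0<..}"
    hence t: "0 < t" by simp
    have "(g2 has_real_derivative ((1/t) / q)) (at t)"
      unfolding g2_def using t qp by (auto intro!: derivative_eq_intros simp: field_simps)
    thus "g2 differentiable at t" using real_differentiable_def by blast
  qed
  have n1: "negligible (g1 ` (N \<inter> {..<0}))"
    by (rule negligible_differentiable_image_negligible[OF _ negligible_subset[OF negN] d1]) auto
  have n2: "negligible (g2 ` (N \<inter> {0<..}))"
    by (rule negligible_differentiable_image_negligible[OF _ negligible_subset[OF negN] d2]) auto
  have "negligible ({0} \<union> g1 ` (N \<inter> {..<0}) \<union> g2 ` (N \<inter> {0<..}))"
    using n1 n2 by (intro negligible_Un) auto
  hence negF: "negligible (F -` N)" using sub negligible_subset by blast
  have Fs: "F -` N \<in> sets lborel"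
    using measurable_sets_borel[OF meas_F, of N r R] Ns by (simp add: F_def[abs_def])
  have "F -` N \<in> null_sets lborel"
    using negF Fs by (simp add: negligible_iff_null_sets null_sets_completion_iff)
  thus ?thesis by (simp add: F_def[abs_def])
qed



lemma K1_sym: "K1 r R (-k) = K1 r R k" and K2_sym: "K2 r R (-k) = K2 r R k"
  by (simp_all add: K1_def K2_def)

lemma purely_ac:
  assumes q: "0 < crescent_q r R"
  shows "NP_purely_ac r R"
  unfolding NP_purely_ac_def
proof
  fix \<phi> assume \<phi>: "\<phi> \<in> Kspace r R"
  have m\<phi>[measurable]: "\<phi> \<in> borel_measurable borel" using \<phi> by (simp add: Kspace_def)
  have iS: "integrable lborel (Sform r R \<phi>)" using \<phi> by (simp add: Kspace_def)
  define w1 where "w1 k = S1 r R k * (cmod (fst (\<phi> k)))^2" for k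
  define w2 where "w2 k = S2 r R k * (cmod (snd (\<phi> k)))^2" for k
  have w1m[measurable]: "w1 \<in> borel_measurable borel" unfolding w1_def by measurable
  have w2m[measurable]: "w2 \<in> borel_measurable borel" unfolding w2_def by measurable
  have w1n: "0 \<le> w1 k" for k unfolding w1_def using S1_nonneg[OF q] by simp
  have w2n: "0 \<le> w2 k" for k unfolding w2_def using S2_nonneg by simp
  have iw1: "integrable lborel w1"
    by (rule Bochner_Integration.integrable_bound[OF iS])
       (use w1n w2n in \<open>auto simp: Sform_def w1_def[symmetric] w2_def[symmetric]\<close>)
  have iw2: "integrable lborel w2"
    by (rule Bochner_Integration.integrable_bound[OF iS])
       (use w1n w2n in \<open>auto simp: Sform_def w1_def[symmetric] w2_def[symmetric]\<close>)
  have iw1': "integrable lborel (\<lambda>k. w1 (-k))" using lborel_integrable_real_affine_iff[of "-1" w1 0] iw1 by simp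
  have iw2': "integrable lborel (\<lambda>k. w2 (-k))" using lborel_integrable_real_affine_iff[of "-1" w2 0] iw2 by simp
  define W where "W k = indicator {0<..} k * (w1 k + w1 (-k)) + indicator {..<0} k * (w2 k + w2 (-k))" for k :: real
  have Wm[measurable]: "W \<in> borel_measurable borel" unfolding W_def by measurable
  have Wn: "0 \<le> W k" for k unfolding W_def using w1n w2n by (auto simp: indicator_def)
  have iW: "integrable lborel W"
  proof -
    have "integrable lborel (\<lambda>k. indicator {0<..} k *\<^sub>R (w1 k + w1 (-k)) + indicator {..<0} k *\<^sub>R (w2 k + w2 (-k)))"
      using iw1 iw2 iw1' iw2' by (intro Bochner_Integration.integrable_add integrable_mult_indicator) auto
    thus ?thesis by (simp add: W_def[abs_def])
  qed
  define F where "F k = (if 0 < k then K1 r R k else K2 r R k)" for k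
  have Fm[measurable]: "F \<in> borel_measurable borel" unfolding F_def by measurable
  define \<mu> where "\<mu> = distr (density lborel (\<lambda>k. ennreal (W k))) borel F"
  show "\<exists>\<mu> :: real measure.
      sets \<mu> = sets borel \<and> finite_measure \<mu> \<and> absolutely_continuous lborel \<mu> \<and>
      (\<forall>z \<psi>. Im z \<noteq> 0 \<longrightarrow> \<psi> \<in> Kspace r R \<longrightarrow>
          (AE k in lborel. NP_shift r R z \<psi> k = \<phi> k) \<longrightarrow>
          Kinner r R \<psi> \<phi> = integral\<^sup>L \<mu> (\<lambda>t. 1 / (complex_of_real t - z)))"
  proof (intro exI[of _ \<mu>] conjI allI impI)
    show "sets \<mu> = sets borel" by (simp add: \<mu>_def)
    show "finite_measure \<mu>"
    proof
      have "emeasure \<mu> (space \<mu>) = emeasure (density lborel (\<lambda>k. ennreal (W k))) UNIV"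
        by (simp add: \<mu>_def emeasure_distr)
      also have "\<dots> = (\<integral>\<^sup>+ k. ennreal (W k) \<partial>lborel)"
        by (simp add: emeasure_density)
      also have "\<dots> = ennreal (integral\<^sup>L lborel W)"
        using iW Wn by (intro nn_integral_eq_integral) auto
      finally show "emeasure \<mu> (space \<mu>) \<noteq> \<infinity>" by simp
    qed
    show "absolutely_continuous lborel \<mu>"
      unfolding absolutely_continuous_def
    proof
      fix N :: "real set" assume N: "N \<in> null_sets lborel"
      have FN: "F -` N \<in> null_sets lborel" using preimage_null[OF q N] by (simp add: F_def[abs_def])
      have "N \<in> sets borel" using N by auto
      moreover have "F -` N \<in> null_sets (density lborel (\<lambda>k. ennreal (W k)))"
        using FN AE_not_in[OF FN] by (subst null_sets_density_iff) (auto elim!: eventually_mono)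
      ultimately show "N \<in> null_sets \<mu>"
        unfolding \<mu>_def by (subst null_sets_distr_iff) auto
    qed
    fix z \<psi>
    assume z: "Im z \<noteq> 0" and \<psi>: "\<psi> \<in> Kspace r R" and h: "AE k in lborel. NP_shift r R z \<psi> k = \<phi> k"
    have m\<psi>[measurable]: "\<psi> \<in> borel_measurable borel" using \<psi> by (simp add: Kspace_def)
    have bnd: "\<bar>Im z\<bar> \<le> cmod (complex_of_real x - z)" for x
      using abs_Im_le_cmod[of "complex_of_real x - z"] by simp
    have nz: "complex_of_real x - z \<noteq> 0" for x using bnd[of x] z by auto
    define G1 where "G1 k = complex_of_real (w1 k) / (complex_of_real (K1 r R k) - z)" for k
    define G2 where "G2 k = complex_of_real (w2 k) / (complex_of_real (K2 r R k) - z)" for k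
    have G1m[measurable]: "G1 \<in> borel_measurable borel" unfolding G1_def by measurable
    have G2m[measurable]: "G2 \<in> borel_measurable borel" unfolding G2_def by measurable
    have iG1: "integrable lborel G1"
    proof (rule Bochner_Integration.integrable_bound[OF integrable_divide[OF iw1, of "\<bar>Im z\<bar>"]])
      show "G1 \<in> borel_measurable lborel" by simp
      show "AE k in lborel. norm (G1 k) \<le> norm (w1 k / \<bar>Im z\<bar>)"
      proof (intro AE_I2)
        fix k
        have "norm (G1 k) = w1 k / cmod (complex_of_real (K1 r R k) - z)"
          using w1n[of k] by (simp add: G1_def norm_divide)
        also have "\<dots> \<le> w1 k / \<bar>Im z\<bar>"
          using w1n[of k] bnd[of "K1 r R k"] z by (intro divide_left_mono) (auto intro!: mult_pos_pos)
        finally show "norm (G1 k) \<le> norm (w1 k / \<bar>Im z\<bar>)" using w1n[of k] by simp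
      qed
    qed
    have iG2: "integrable lborel G2"
    proof (rule Bochner_Integration.integrable_bound[OF integrable_divide[OF iw2, of "\<bar>Im z\<bar>"]])
      show "G2 \<in> borel_measurable lborel" by simp
      show "AE k in lborel. norm (G2 k) \<le> norm (w2 k / \<bar>Im z\<bar>)"
      proof (intro AE_I2)
        fix k
        have "norm (G2 k) = w2 k / cmod (complex_of_real (K2 r R k) - z)"
          using w2n[of k] by (simp add: G2_def norm_divide)
        also have "\<dots> \<le> w2 k / \<bar>Im z\<bar>"
          using w2n[of k] bnd[of "K2 r R k"] z by (intro divide_left_mono) (auto intro!: mult_pos_pos)
        finally show "norm (G2 k) \<le> norm (w2 k / \<bar>Im z\<bar>)" using w2n[of k] by simp
      qed
    qed
    have cns: "(complex_of_real (cmod a))^2 = a * cnj a" for a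
      using complex_norm_square[of a] by simp
    have "Kinner r R \<psi> \<phi> = integral\<^sup>L lborel (\<lambda>k. G1 k + G2 k)"
      unfolding Kinner_def
    proof (rule integral_cong_AE)
      show "AE k in lborel. complex_of_real (S1 r R k) * fst (\<psi> k) * cnj (fst (\<phi> k)) +
          complex_of_real (S2 r R k) * snd (\<psi> k) * cnj (snd (\<phi> k)) = G1 k + G2 k"
        using h
      proof eventually_elim
        case (elim k)
        have a1: "fst (\<phi> k) = (complex_of_real (K1 r R k) - z) * fst (\<psi> k)"
          using arg_cong[OF elim, of fst] by (simp add: NP_shift_def)
        have a2: "snd (\<phi> k) = (complex_of_real (K2 r R k) - z) * snd (\<psi> k)"
          using arg_cong[OF elim, of snd] by (simp add: NP_shift_def)
        have "G1 k = complex_of_real (S1 r R k) * (fst (\<phi> k) * cnj (fst (\<phi> k))) / (complex_of_real (K1 r R k) - z)"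
          by (simp add: G1_def w1_def cns)
        also have "\<dots> = complex_of_real (S1 r R k) * fst (\<psi> k) * cnj (fst (\<phi> k))"
        proof -
          have e: "fst (\<psi> k) = fst (\<phi> k) / (complex_of_real (K1 r R k) - z)"
            by (subst nonzero_eq_divide_eq[OF nz]) (simp add: a1 mult.commute)
          show ?thesis using nz[of "K1 r R k"] by (simp add: e field_simps)
        qed
        finally have b1: "G1 k = complex_of_real (S1 r R k) * fst (\<psi> k) * cnj (fst (\<phi> k))" .
        have "G2 k = complex_of_real (S2 r R k) * (snd (\<phi> k) * cnj (snd (\<phi> k))) / (complex_of_real (K2 r R k) - z)"
          by (simp add: G2_def w2_def cns)
        also have "\<dots> = complex_of_real (S2 r R k) * snd (\<psi> k) * cnj (snd (\<phi> k))"
        proof -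
          have e: "snd (\<psi> k) = snd (\<phi> k) / (complex_of_real (K2 r R k) - z)"
            by (subst nonzero_eq_divide_eq[OF nz]) (simp add: a2 mult.commute)
          show ?thesis using nz[of "K2 r R k"] by (simp add: e field_simps)
        qed
        finally have b2: "G2 k = complex_of_real (S2 r R k) * snd (\<psi> k) * cnj (snd (\<phi> k))" .
        show ?case using b1 b2 by simp
      qed
    qed simp_all
    also have "\<dots> = integral\<^sup>L lborel G1 + integral\<^sup>L lborel G2"
      using iG1 iG2 by (rule Bochner_Integration.integral_add)
    also have "\<dots> = integral\<^sup>L lborel (\<lambda>k. indicator {0<..} k *\<^sub>R (G1 k + G1 (-k)))
                   + integral\<^sup>L lborel (\<lambda>k. indicator {..<0} k *\<^sub>R (G2 k + G2 (-k)))"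
      using fold_pos[OF iG1] fold_neg[OF iG2] by simp
    also have "\<dots> = integral\<^sup>L lborel (\<lambda>k. indicator {0<..} k *\<^sub>R (G1 k + G1 (-k))
                   + indicator {..<0} k *\<^sub>R (G2 k + G2 (-k)))"
      by (rule Bochner_Integration.integral_add[symmetric])
         (use iG1 iG2 reflect(1)[OF iG1] reflect(1)[OF iG2] in \<open>(intro Bochner_Integration.integrable_add integrable_mult_indicator; simp)+\<close>)
    also have "\<dots> = integral\<^sup>L lborel (\<lambda>k. W k *\<^sub>R (1 / (complex_of_real (F k) - z)))"
    proof (rule Bochner_Integration.integral_cong[OF refl])
      fix k :: real
      show "indicator {0<..} k *\<^sub>R (G1 k + G1 (-k)) + indicator {..<0} k *\<^sub>R (G2 k + G2 (-k))
          = W k *\<^sub>R (1 / (complex_of_real (F k) - z))"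
        by (cases "0 < k"; cases "k < 0")
           (simp_all add: W_def F_def G1_def G2_def K1_sym K2_sym scaleR_conv_of_real add_divide_distrib)
    qed
    also have "\<dots> = integral\<^sup>L (density lborel (\<lambda>k. ennreal (W k))) (\<lambda>k. 1 / (complex_of_real (F k) - z))"
      by (rule integral_density[symmetric]) (use Wn in auto)
    also have "\<dots> = integral\<^sup>L \<mu> (\<lambda>t. 1 / (complex_of_real t - z))"
      unfolding \<mu>_def by (rule integral_distr[symmetric]) auto
    finally show "Kinner r R \<psi> \<phi> = integral\<^sup>L \<mu> (\<lambda>t. 1 / (complex_of_real t - z))" .
  qed
qed


theorem theorem3p7:
  fixes r R :: real
  assumes "0 < r" and "r < R"
  shows "NP_purely_ac r R \<and> NP_spectrum r R = complex_of_real ` {-1/2 .. 1/2}"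
proof -
  have "1 / (2 * R) < 1 / (2 * r)"
    using assms by (intro divide_strict_left_mono) (auto intro!: mult_pos_pos)
  hence q: "0 < crescent_q r R" by (simp add: crescent_q_def)
  show ?thesis using purely_ac[OF q] spectrum_eq[OF q] by simp
qed

end
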